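(* For every real constant $c>0$ and every positive integer $N_0$, there exist an integer $N\ge N_0$ and a bipartite graph $W$ with $N$ vertices in each part and exactly $N^{6/5}$ edges such that $W$ is $C_{10}$-free and every subgraph of $W$ with at least $c\,|E(W)|$ edges contains a copy of $C_8$.
   Context: $C_m$ denotes the cycle of length $m$; a graph is $F$-free if it contains no subgraph isomorphic to $F$. (In the paper, $W$ is the Wenger graph $W_5(q)$: for a prime power $q$, the bipartite point–line incidence graph between $\mathbb{F}_q^5$ and the set of all affine lines $\{v+t(1,a,a^2,a^3,a^4): t\in\mathbb{F}_q\}$, $v\in\mathbb{F}_q^5$, $a\in\mathbb{F}_q$, so $N=q^5$.) *)

theory Defs
  imports Complex_Main
begin

text \<open>We take both parts to be {0..<N} (as two separate sorts, the first and second
  coordinate), which is faithful up to isomorphism.\<close>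

definition bip_graph :: "nat \<Rightarrow> (nat \<times> nat) set \<Rightarrow> bool" where
  "bip_graph N E \<longleftrightarrow> E \<subseteq> {0..<N} \<times> {0..<N}"

text \<open>E contains a copy of the cycle C_m (m even, m >= 4): with k = m div 2 there are
  distinct left vertices a 0, ..., a (k-1) and distinct right vertices b 0, ..., b (k-1)
  such that a i -- b i -- a (i+1 mod k) are edges. (Cycles in a bipartite graph
  alternate sides, so this captures every copy of C_m as a subgraph.)\<close>

definition contains_cycle :: "nat \<Rightarrow> (nat \<times> nat) set \<Rightarrow> bool" where
  "contains_cycle m E \<longleftrightarrow> even m \<and> m \<ge> 4 \<and>
     (\<exists>a b :: nat \<Rightarrow> nat. inj_on a {..<m div 2} \<and> inj_on b {..<m div 2} \<and>
        (\<forall>i < m div 2. (a i, b i) \<in> E \<and> (a ((i + 1) mod (m div 2)), b i) \<in> E))"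

end

theory Submission
  imports Defs "HOL-Library.FuncSet" "HOL-Computational_Algebra.Polynomial" "HOL-Computational_Algebra.Primes"
begin

definition Pts :: "int \<Rightarrow> (nat \<Rightarrow> int) set" where
  "Pts p = PiE {..<5} (\<lambda>_. {0..<p})"

definition line :: "int \<Rightarrow> (nat \<Rightarrow> int) \<Rightarrow> int \<Rightarrow> int \<times> (nat \<Rightarrow> int)" where
  "line p x a = (a, restrict (\<lambda>j. (x j - x 0 * a^j) mod p) {1..4})"

definition Lns :: "int \<Rightarrow> (int \<times> (nat \<Rightarrow> int)) set" where
  "Lns p = {0..<p} \<times> PiE {1..4} (\<lambda>_. {0..<p})"

definition Edg :: "int \<Rightarrow> ((nat \<Rightarrow> int) \<times> (int \<times> (nat \<Rightarrow> int))) set" where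
  "Edg p = (\<lambda>(x,a). (x, line p x a)) ` (Pts p \<times> {0..<p})"

definition on_same :: "int \<Rightarrow> int \<Rightarrow> (nat \<Rightarrow> int) \<Rightarrow> (nat \<Rightarrow> int) \<Rightarrow> bool" where
  "on_same p a x y \<longleftrightarrow> (\<forall>j<5. p dvd (y j - x j - (y 0 - x 0) * a^j))"

lemma zp_eq: fixes u v p :: int
  assumes "0 \<le> u" "u < p" "0 \<le> v" "v < p" "p dvd (u - v)" shows "u = v"
proof -
  have "u mod p = v mod p" using assms(5) by (simp add: mod_eq_dvd_iff)
  thus ?thesis using assms by simp
qed

lemma pts_eq:
  assumes "x \<in> Pts p" "y \<in> Pts p" "\<And>j. j < 5 \<Longrightarrow> p dvd (y j - x j)"
  shows "x = y"
proof (rule PiE_ext[of x "{..<5}" "\<lambda>_. {0..<p}"])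
  show "x \<in> PiE {..<5} (\<lambda>_. {0..<p})" "y \<in> PiE {..<5} (\<lambda>_. {0..<p})" using assms Pts_def by auto
  fix i assume "i \<in> {..<5::nat}"
  then have "x i \<in> {0..<p}" "y i \<in> {0..<p}" "p dvd (x i - y i)" using assms unfolding Pts_def
    by (auto simp: PiE_iff dvd_diff_commute)
  then show "x i = y i" using zp_eq by auto
qed

lemma line_eq:
  assumes "x \<in> Pts p" "y \<in> Pts p"
  shows "line p x a = line p y a \<longleftrightarrow> on_same p a x y"
proof -
  have "line p x a = line p y a \<longleftrightarrow> (\<forall>j\<in>{1..4}. (x j - x 0 * a^j) mod p = (y j - y 0 * a^j) mod p)"
    unfolding line_def by (auto simp: restrict_def fun_eq_iff split: if_splits)
  also have "\<dots> \<longleftrightarrow> (\<forall>j\<in>{1..4}. p dvd (y j - x j - (y 0 - x 0) * a^j))"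
  proof -
    have "\<And>j. (x j - x 0 * a^j) mod p = (y j - y 0 * a^j) mod p \<longleftrightarrow> p dvd (y j - x j - (y 0 - x 0) * a^j)"
    proof -
      fix j
      have "(y j - x j - (y 0 - x 0) * a^j) = - ((x j - x 0 * a^j) - (y j - y 0 * a^j))"
        by (simp add: algebra_simps)
      then show "(x j - x 0 * a^j) mod p = (y j - y 0 * a^j) mod p \<longleftrightarrow> p dvd (y j - x j - (y 0 - x 0) * a^j)"
        by (metis dvd_minus_iff mod_eq_dvd_iff)
    qed
    then show ?thesis by simp
  qed
  also have "\<dots> \<longleftrightarrow> on_same p a x y"
    unfolding on_same_def
  proof
    assume h: "\<forall>j\<in>{1..4}. p dvd (y j - x j - (y 0 - x 0) * a^j)"
    show "\<forall>j<5. p dvd (y j - x j - (y 0 - x 0) * a^j)"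
    proof (intro allI impI)
      fix j :: nat assume "j < 5"
      then show "p dvd (y j - x j - (y 0 - x 0) * a^j)"
        using h by (cases "j = 0") auto
    qed
  qed auto
  finally show ?thesis .
qed

lemma on_same_sym: "on_same p a x y \<Longrightarrow> on_same p a y x"
  unfolding on_same_def
proof (intro allI impI)
  fix j :: nat assume h: "\<forall>j<5. p dvd y j - x j - (y 0 - x 0) * a ^ j" and j: "j < 5"
  have "x j - y j - (x 0 - y 0) * a ^ j = - (y j - x j - (y 0 - x 0) * a ^ j)" by (simp add: algebra_simps)
  then show "p dvd x j - y j - (x 0 - y 0) * a ^ j" using h j by (metis dvd_minus_iff)
qed

lemma on_same_trans: "on_same p a x y \<Longrightarrow> on_same p a y z \<Longrightarrow> on_same p a x z"
  unfolding on_same_def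
proof (intro allI impI)
  fix j :: nat assume h1: "\<forall>j<5. p dvd y j - x j - (y 0 - x 0) * a ^ j"
    and h2: "\<forall>j<5. p dvd z j - y j - (z 0 - y 0) * a ^ j" and j: "j < 5"
  have "z j - x j - (z 0 - x 0) * a ^ j = (y j - x j - (y 0 - x 0) * a ^ j) + (z j - y j - (z 0 - y 0) * a ^ j)"
    by (simp add: algebra_simps)
  then show "p dvd z j - x j - (z 0 - x 0) * a ^ j" using h1 h2 j by (metis dvd_add)
qed

lemma dirs_eq:
  assumes "prime p" "x \<in> Pts p" "y \<in> Pts p" "a \<in> {0..<p}" "b \<in> {0..<p}"
    "on_same p a x y" "on_same p b x y" "x \<noteq> y"
  shows "a = b"
proof -
  define s where "s = y 0 - x 0"
  have h1: "p dvd (y 1 - x 1 - s * a)"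
  proof -
    have "(1::nat) < 5" by simp
    then have "p dvd (y 1 - x 1 - (y 0 - x 0) * a^1)" using assms(6) unfolding on_same_def by blast
    then show ?thesis by (simp add: s_def)
  qed
  have h2: "p dvd (y 1 - x 1 - s * b)"
  proof -
    have "(1::nat) < 5" by simp
    then have "p dvd (y 1 - x 1 - (y 0 - x 0) * b^1)" using assms(7) unfolding on_same_def by blast
    then show ?thesis by (simp add: s_def)
  qed
  have "(y 1 - x 1 - s * a) - (y 1 - x 1 - s * b) = s * (b - a)" by (simp add: algebra_simps)
  then have "p dvd s * (b - a)" using h1 h2 by (metis dvd_diff)
  then have "p dvd s \<or> p dvd (b - a)" using assms(1) by (simp add: prime_dvd_mult_iff)
  moreover have "\<not> p dvd s"
  proof
    assume ps: "p dvd s"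
    have "\<And>j. j < 5 \<Longrightarrow> p dvd (y j - x j)"
    proof -
      fix j :: nat assume j: "j < 5"
      have "p dvd (y j - x j - s * a^j)" using assms(6) j unfolding on_same_def s_def by auto
      moreover have "p dvd s * a^j" using ps by simp
      ultimately show "p dvd (y j - x j)" by (metis diff_add_cancel dvd_add)
    qed
    then have "x = y" using pts_eq assms(2,3) by blast
    then show False using assms(8) by simp
  qed
  ultimately have "p dvd (b - a)" by simp
  then show ?thesis using zp_eq[of b p a] assms(4,5) by auto
qed

lemma edg_iff: "(x, l) \<in> Edg p \<longleftrightarrow> x \<in> Pts p \<and> fst l \<in> {0..<p} \<and> l = line p x (fst l)"
  unfolding Edg_def line_def by (cases l) auto

lemma vander:
  fixes p :: int and d t :: "nat \<Rightarrow> int"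
  assumes "prime p" "finite I" "\<forall>i\<in>I. d i \<in> {0..<p}" "card (d ` I) \<le> 5"
    "\<forall>j<5. p dvd (\<Sum>i\<in>I. t i * d i ^ j)" "i0 \<in> I"
  shows "p dvd (\<Sum>i\<in>{i\<in>I. d i = d i0}. t i)"
proof -
  define E where "E = d ` I - {d i0}"
  define Q where "Q = (\<Prod>e\<in>E. [:-e, 1:])"
  have fE: "finite E" using assms E_def by auto
  have "card E = card (d ` I) - 1" unfolding E_def using assms(2,6) by (simp add: card_Diff_singleton)
  then have cE: "card E \<le> 4" using assms(4) by simp
  have "degree Q \<le> (\<Sum>e\<in>E. degree [:-e, 1::int:])" unfolding Q_def using degree_prod_sum_le[OF fE, of "\<lambda>e. [:-e, 1:]"] by (simp add: o_def)
  also have "\<dots> = card E" by simp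
  finally have dQ: "degree Q \<le> 4" using cE by simp
  have polyQ: "poly Q z = (\<Sum>l<5. coeff Q l * z^l)" for z
  proof -
    have "poly Q z = (\<Sum>l\<le>degree Q. coeff Q l * z^l)" by (rule poly_altdef)
    also have "\<dots> = (\<Sum>l<5. coeff Q l * z^l)"
      by (rule sum.mono_neutral_left) (use dQ in \<open>auto simp: coeff_eq_0\<close>)
    finally show ?thesis .
  qed
  have "(\<Sum>i\<in>I. t i * poly Q (d i)) = (\<Sum>i\<in>I. \<Sum>l<5. coeff Q l * (t i * d i ^ l))"
    by (simp add: polyQ sum_distrib_left algebra_simps)
  also have "\<dots> = (\<Sum>l<5. coeff Q l * (\<Sum>i\<in>I. t i * d i ^ l))"
    by (subst sum.swap) (simp add: sum_distrib_left)
  finally have eq1: "(\<Sum>i\<in>I. t i * poly Q (d i)) = (\<Sum>l<5. coeff Q l * (\<Sum>i\<in>I. t i * d i ^ l))" .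
  have "p dvd (\<Sum>l<5. coeff Q l * (\<Sum>i\<in>I. t i * d i ^ l))"
    using assms(5) by (intro dvd_sum) simp
  then have dv1: "p dvd (\<Sum>i\<in>I. t i * poly Q (d i))" using eq1 by simp
  have pz: "poly Q (d i) = 0" if "i \<in> I" "d i \<noteq> d i0" for i
  proof -
    have "d i \<in> E" using that E_def by auto
    then show ?thesis unfolding Q_def poly_prod using fE by (auto intro: prod_zero)
  qed
  have "(\<Sum>i\<in>I. t i * poly Q (d i)) = (\<Sum>i\<in>I. if d i = d i0 then t i * poly Q (d i0) else 0)"
    by (rule sum.cong) (auto simp: pz)
  also have "\<dots> = (\<Sum>i\<in>{i\<in>I. d i = d i0}. t i * poly Q (d i0))"
    using assms(2) by (simp add: sum.inter_filter)
  also have "\<dots> = (\<Sum>i\<in>{i\<in>I. d i = d i0}. t i) * poly Q (d i0)"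
    by (simp add: sum_distrib_right)
  finally have "p dvd (\<Sum>i\<in>{i\<in>I. d i = d i0}. t i) * poly Q (d i0)" using dv1 by simp
  moreover have "\<not> p dvd poly Q (d i0)"
  proof
    assume "p dvd poly Q (d i0)"
    then have "p dvd (\<Prod>e\<in>E. d i0 - e)" unfolding Q_def poly_prod by simp
    then obtain e where e: "e \<in> E" "p dvd (d i0 - e)" using prime_dvd_prod_iff[OF fE assms(1)] by auto
    then have "e \<in> {0..<p}" "d i0 \<in> {0..<p}" using assms(3,6) E_def by auto
    then have "d i0 = e" using zp_eq e(2) by auto
    then show False using e(1) E_def by auto
  qed
  ultimately show ?thesis using assms(1) by (simp add: prime_dvd_mult_iff)
qed

lemma cyc5_unique:
  fixes d :: "nat \<Rightarrow> 'a"
  assumes "\<forall>i<5. d i \<noteq> d ((i + 1) mod 5)"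
  shows "\<exists>i0<5. {i\<in>{..<5}. d i = d i0} = {i0}"
proof -
  have e: "\<And>i j. i < 5 \<Longrightarrow> (i + 1) mod 5 = j \<Longrightarrow> d i \<noteq> d j" using assms by blast
  have h1: "d 0 \<noteq> d 1" by (rule e) simp_all
  have h2: "d 1 \<noteq> d 2" by (rule e) simp_all
  have h3: "d 2 \<noteq> d 3" by (rule e) simp_all
  have h4: "d 3 \<noteq> d 4" by (rule e) simp_all
  have h5: "d 4 \<noteq> d 0" by (rule e) simp_all
  have five: "{..<5::nat} = {0,1,2,3,4}" by auto
  have un: "{i\<in>{..<5}. d i = d i0} = {i0}" if "i0 \<in> {0,1,2,3,4}" "\<forall>k\<in>{0,1,2,3,4}. k \<noteq> i0 \<longrightarrow> d k \<noteq> d i0" for i0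
    using that unfolding five by auto
  consider "d 0 \<noteq> d 2 \<and> d 0 \<noteq> d 3" | "d 1 \<noteq> d 3 \<and> d 1 \<noteq> d 4" | "d 2 \<noteq> d 4 \<and> d 2 \<noteq> d 0"
     | "d 3 \<noteq> d 0 \<and> d 3 \<noteq> d 1" | "d 4 \<noteq> d 1 \<and> d 4 \<noteq> d 2"
  proof (cases "d 0 = d 2")
    case e: True
    show ?thesis
    proof (cases "d 4 = d 2")
      case True then show ?thesis using e h5 by simp
    next
      case n4: False
      show ?thesis
      proof (cases "d 4 = d 1")
        case f: True
        have "d 3 \<noteq> d 0" using e h3 by simp
        moreover have "d 3 \<noteq> d 1" using f h4 by simp
        ultimately show ?thesis using that(4) by blast
      next
        case False then show ?thesis using that(5) n4 by blast
      qed
    qed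
  next
    case n02: False
    show ?thesis
    proof (cases "d 0 = d 3")
      case False then show ?thesis using that(1) n02 by blast
    next
      case e: True
      show ?thesis
      proof (cases "d 2 = d 0")
        case True then show ?thesis using e h3 by simp
      next
        case n20: False
        show ?thesis
        proof (cases "d 2 = d 4")
          case f: True
          have "d 1 \<noteq> d 3" using e h1 by simp
          moreover have "d 1 \<noteq> d 4" using f h2 by simp
          ultimately show ?thesis using that(2) by blast
        next
          case False then show ?thesis using that(3) n20 by blast
        qed
      qed
    qed
  qed
  then show ?thesis
  proof cases
    case 1 then show ?thesis using h1 h5 by (intro exI[of _ 0] conjI un) auto
  next
    case 2 then show ?thesis using h1 h2 by (intro exI[of _ 1] conjI un) auto
  next
    case 3 then show ?thesis using h2 h3 by (intro exI[of _ 2] conjI un) auto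
  next
    case 4 then show ?thesis using h3 h4 by (intro exI[of _ 3] conjI un) auto
  next
    case 5 then show ?thesis using h4 h5 by (intro exI[of _ 4] conjI un) auto
  qed
qed

lemma s5: "sum (f::nat\<Rightarrow>int) {..<5} = f 0 + f 1 + f 2 + f 3 + f 4"
  by (simp add: numeral_eq_Suc)

lemma cyc5_sum: "(\<Sum>i<5. (g::nat\<Rightarrow>int) ((i + 1) mod 5)) = (\<Sum>i<5. g i)"
  apply (simp only: s5)
  apply simp
  apply (simp add: numeral_2_eq_2)
  done

lemma no_c10:
  assumes "prime p"
  shows "\<not> (\<exists>a b. inj_on a {..<5::nat} \<and> inj_on b {..<5} \<and>
     (\<forall>i<5. (a i, b i) \<in> Edg p \<and> (a ((i + 1) mod 5), b i) \<in> Edg p))"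
proof
  assume "\<exists>a b. inj_on a {..<5::nat} \<and> inj_on b {..<5} \<and>
     (\<forall>i<5. (a i, b i) \<in> Edg p \<and> (a ((i + 1) mod 5), b i) \<in> Edg p)"
  then obtain a b where ia: "inj_on a {..<5::nat}" and ib: "inj_on b {..<5}"
    and e: "\<And>i. i < 5 \<Longrightarrow> (a i, b i) \<in> Edg p \<and> (a ((i + 1) mod 5), b i) \<in> Edg p" by blast
  define d where "d i = fst (b i)" for i
  define t where "t i = a ((i + 1) mod 5) 0 - a i 0" for i
  have aP: "a i \<in> Pts p" if "i < 5" for i using e[OF that] by (simp add: edg_iff)
  have dZ: "d i \<in> {0..<p}" if "i < 5" for i using e[OF that] by (simp add: edg_iff d_def)
  have bl: "b i = line p (a i) (d i)" if "i < 5" for i using e[OF that] by (simp add: edg_iff d_def)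
  have bl2: "b i = line p (a ((i + 1) mod 5)) (d i)" if "i < 5" for i using e[OF that] by (simp add: edg_iff d_def)
  have os: "on_same p (d i) (a i) (a ((i + 1) mod 5))" if "i < 5" for i
  proof -
    have "line p (a i) (d i) = line p (a ((i + 1) mod 5)) (d i)" using bl[OF that] bl2[OF that] by simp
    then show ?thesis using line_eq[OF aP[OF that] aP[of "(i+1) mod 5"]] by simp
  qed
  have osj: "p dvd (a ((i + 1) mod 5) j - a i j - t i * d i ^ j)" if "i < 5" "j < 5" for i j
    using os[OF that(1)] that(2) unfolding on_same_def t_def by auto
  have tel: "(\<Sum>i<5. a ((i + 1) mod 5) j - a i j) = 0" for j
  proof -
    have "(\<Sum>i<5. a ((i + 1) mod 5) j - a i j) = (\<Sum>i<5. a ((i + 1) mod 5) j) - (\<Sum>i<5. a i j)"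
      by (rule sum_subtractf)
    moreover have "(\<Sum>i<5. a ((i + 1) mod 5) j) = (\<Sum>i<5. a i j)" by (rule cyc5_sum)
    ultimately show ?thesis by linarith
  qed
  have sdv: "p dvd (\<Sum>i<5. t i * d i ^ j)" if "j < 5" for j
  proof -
    have "p dvd (\<Sum>i<5. a ((i + 1) mod 5) j - a i j - t i * d i ^ j)"
      using osj that by (intro dvd_sum) auto
    also have "(\<Sum>i<5. a ((i + 1) mod 5) j - a i j - t i * d i ^ j) = - (\<Sum>i<5. t i * d i ^ j)"
      using tel[of j] by (simp add: sum_subtractf)
    finally show ?thesis by simp
  qed
  have adj: "d i \<noteq> d ((i + 1) mod 5)" if "i < 5" for i
  proof
    assume eq: "d i = d ((i + 1) mod 5)"
    have "b i = b ((i + 1) mod 5)"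
      using bl2[OF that] bl[of "(i + 1) mod 5"] eq by simp
    moreover have "i \<noteq> (i + 1) mod 5" using that by (cases "i = 4") auto
    ultimately show False using ib that inj_on_def[of b "{..<5}"] by auto
  qed
  obtain i0 where i0: "i0 < 5" "{i\<in>{..<5}. d i = d i0} = {i0}"
    using cyc5_unique[of d] adj by auto
  have "card (d ` {..<5}) \<le> 5" using card_image_le[of "{..<5::nat}" d] by simp
  then have "p dvd (\<Sum>i\<in>{i\<in>{..<5}. d i = d i0}. t i)"
    using vander[OF assms, of "{..<5}" d t i0] dZ sdv i0(1) by auto
  then have pt: "p dvd t i0" using i0(2) by simp
  have "\<And>j. j < 5 \<Longrightarrow> p dvd (a ((i0 + 1) mod 5) j - a i0 j)"
  proof -
    fix j :: nat assume j: "j < 5"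
    have "p dvd t i0 * d i0 ^ j" using pt by simp
    then show "p dvd (a ((i0 + 1) mod 5) j - a i0 j)" using osj[OF i0(1) j] by (metis diff_add_cancel dvd_add)
  qed
  then have "a i0 = a ((i0 + 1) mod 5)" by (intro pts_eq[OF aP[OF i0(1)] aP]) auto
  moreover have "i0 \<noteq> (i0 + 1) mod 5" using i0(1) by (cases "i0 = 4") auto
  ultimately show False using ia i0(1) inj_on_def[of a "{..<5}"] by auto
qed

lemma my_cs:
  fixes f :: "'a \<Rightarrow> real"
  assumes "finite B"
  shows "(\<Sum>y\<in>B. f y)^2 \<le> real (card B) * (\<Sum>y\<in>B. (f y)^2)"
proof -
  have "0 \<le> (\<Sum>y\<in>B. \<Sum>z\<in>B. (f y - f z)^2)" by (intro sum_nonneg) auto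
  also have "\<dots> = (\<Sum>y\<in>B. \<Sum>z\<in>B. (f y)^2 + (f z)^2 - 2 * f y * f z)"
    by (simp add: power2_diff algebra_simps)
  also have "\<dots> = (\<Sum>y\<in>B. real (card B) * (f y)^2 + (\<Sum>z\<in>B. (f z)^2) - 2 * f y * (\<Sum>z\<in>B. f z))"
    by (simp add: sum.distrib sum_subtractf sum_distrib_left)
  also have "\<dots> = (\<Sum>y\<in>B. real (card B) * (f y)^2) + (\<Sum>y\<in>B. (\<Sum>z\<in>B. (f z)^2)) - (\<Sum>y\<in>B. 2 * f y * (\<Sum>z\<in>B. f z))"
    by (simp add: sum.distrib sum_subtractf)
  also have "(\<Sum>y\<in>B. real (card B) * (f y)^2) = real (card B) * (\<Sum>y\<in>B. (f y)^2)"
    by (rule sum_distrib_left[symmetric])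
  also have "(\<Sum>y\<in>B. (\<Sum>z\<in>B. (f z)^2)) = real (card B) * (\<Sum>y\<in>B. (f y)^2)"
    by simp
  also have "(\<Sum>y\<in>B. 2 * f y * (\<Sum>z\<in>B. f z)) = 2 * (\<Sum>y\<in>B. f y)^2"
    by (simp add: sum_distrib_right[symmetric] sum_distrib_left[symmetric] power2_eq_square mult.assoc)
  finally show ?thesis by simp
qed
lemma cs_fiber:
  fixes h :: "'a \<Rightarrow> 'b"
  assumes "finite A" "finite B" "h ` A \<subseteq> B"
  shows "real (card A)^2 \<le> real (card B) * real (card {(u,v). u \<in> A \<and> v \<in> A \<and> h u = h v})"
proof -
  define n where "n y = card {u\<in>A. h u = y}" for y
  have eqA: "A = (\<Union>y\<in>B. {u\<in>A. h u = y})" using assms(3) by auto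
  have "card A = card (\<Union>y\<in>B. {u\<in>A. h u = y})" using eqA by simp
  also have "\<dots> = (\<Sum>y\<in>B. n y)" unfolding n_def
    by (rule card_UN_disjoint) (use assms in auto)
  finally have cA: "card A = (\<Sum>y\<in>B. n y)" .
  have eqP: "{(u,v). u \<in> A \<and> v \<in> A \<and> h u = h v} = (\<Union>y\<in>B. {u\<in>A. h u = y} \<times> {u\<in>A. h u = y})"
    using assms(3) by auto
  have "card {(u,v). u \<in> A \<and> v \<in> A \<and> h u = h v} = card (\<Union>y\<in>B. {u\<in>A. h u = y} \<times> {u\<in>A. h u = y})"
    using eqP by simp
  also have "\<dots> = (\<Sum>y\<in>B. card ({u\<in>A. h u = y} \<times> {u\<in>A. h u = y}))"
    by (rule card_UN_disjoint) (use assms in auto)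
  also have "\<dots> = (\<Sum>y\<in>B. n y * n y)" unfolding n_def by (simp add: card_cartesian_product)
  finally have cP: "card {(u,v). u \<in> A \<and> v \<in> A \<and> h u = h v} = (\<Sum>y\<in>B. n y * n y)" .
  have "(\<Sum>y\<in>B. real (n y))\<^sup>2 \<le> (\<Sum>y\<in>B. (real (n y))\<^sup>2) * card B"
    using my_cs[OF assms(2), of "\<lambda>y. real (n y)"] by (simp add: mult.commute)
  then show ?thesis unfolding cA cP by (simp add: power2_eq_square mult.commute)
qed

lemma para:
  assumes "on_same p a x x'" "on_same p a y y'" "on_same p b x y" "p dvd ((x' 0 - x 0) - (y' 0 - y 0))"
  shows "on_same p b x' y'"
  unfolding on_same_def
proof (intro allI impI)
  fix j :: nat assume j: "j < 5"
  define D where "D = (y' 0 - y 0) - (x' 0 - x 0)"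
  have pD: "p dvd D" using assms(4) unfolding D_def by (metis dvd_minus_iff minus_diff_eq)
  have "y' j - x' j - (y' 0 - x' 0) * b ^ j =
     (y' j - y j - (y' 0 - y 0) * a ^ j) + (y j - x j - (y 0 - x 0) * b ^ j)
     - (x' j - x j - (x' 0 - x 0) * a ^ j) + D * (a ^ j - b ^ j)"
    unfolding D_def by (simp add: algebra_simps)
  moreover have "p dvd (y' j - y j - (y' 0 - y 0) * a ^ j)" using assms(2) j unfolding on_same_def by auto
  moreover have "p dvd (y j - x j - (y 0 - x 0) * b ^ j)" using assms(3) j unfolding on_same_def by auto
  moreover have "p dvd (x' j - x j - (x' 0 - x 0) * a ^ j)" using assms(1) j unfolding on_same_def by auto
  moreover have "p dvd D * (a ^ j - b ^ j)" using pD by simp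
  ultimately show "p dvd y' j - x' j - (y' 0 - x' 0) * b ^ j" by (metis dvd_add dvd_diff)
qed


definition acyc :: "nat \<Rightarrow> ('a \<times> 'b) set \<Rightarrow> bool" where
  "acyc k E \<longleftrightarrow> (\<exists>a b. inj_on a {..<k} \<and> inj_on b {..<k} \<and>
      (\<forall>i<k. (a i, b i) \<in> E \<and> (a ((i + 1) mod k), b i) \<in> E))"

lemma rect_c8:
  assumes "prime p" "x \<in> Pts p" "x' \<in> Pts p" "y \<in> Pts p" "y' \<in> Pts p"
    "a \<in> {0..<p}" "b \<in> {0..<p}" "a \<noteq> b"
    "(x, line p x a) \<in> F" "(x, line p x b) \<in> F" "(x', line p x' a) \<in> F" "(x', line p x' b) \<in> F"
    "(y, line p y a) \<in> F" "(y, line p y b) \<in> F" "(y', line p y' a) \<in> F" "(y', line p y' b) \<in> F"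
    "on_same p a x x'" "on_same p a y y'" "on_same p b x y" "on_same p b x' y'" "x \<noteq> x'" "x \<noteq> y"
  shows "acyc 4 F"
proof -
  note P = assms(2-5)
  have K: "on_same p a u v \<Longrightarrow> on_same p b u v \<Longrightarrow> u \<in> Pts p \<Longrightarrow> v \<in> Pts p \<Longrightarrow> u = v" for u v
    using dirs_eq[OF assms(1) _ _ assms(6,7)] assms(8) by blast
  have Kxy: "\<not> on_same p a x y" using K[OF _ assms(19) assms(2) assms(4)] assms(22) by blast
  have Kxx: "\<not> on_same p b x x'" using K[OF assms(17) _ assms(2) assms(3)] assms(21) by blast
  have d1: "x \<noteq> y'"
  proof
    assume e: "x = y'"
    have "on_same p a y x" using assms(18) e by simp
    then show False using Kxy on_same_sym by blast
  qed
  have d2: "x' \<noteq> y"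
  proof
    assume "x' = y"
    then have "on_same p a x y" using assms(17) by simp
    then show False using Kxy by blast
  qed
  have d3: "x' \<noteq> y'"
  proof
    assume e: "x' = y'"
    have "on_same p a y x'" using assms(18) e by simp
    then have "on_same p a x y" using on_same_trans[OF assms(17) on_same_sym] by blast
    then show False using Kxy by blast
  qed
  have d4: "y \<noteq> y'"
  proof
    assume e: "y = y'"
    have "on_same p b x' y" using assms(20) e by simp
    then have "on_same p b x x'" using on_same_trans[OF assms(19) on_same_sym] by blast
    then show False using Kxx by blast
  qed
  have l1: "line p x a = line p x' a" using line_eq[OF assms(2,3)] assms(17) by blast
  have l2: "line p x' b = line p y' b" using line_eq[OF assms(3,5)] assms(20) by blast
  have l3: "line p y a = line p y' a" using line_eq[OF assms(4,5)] assms(18) by blast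
  have l4: "line p x b = line p y b" using line_eq[OF assms(2,4)] assms(19) by blast
  have dl1: "line p x a \<noteq> line p y' a"
  proof
    assume "line p x a = line p y' a"
    then have "on_same p a x y'" using line_eq[OF assms(2,5)] by blast
    then have "on_same p a x y" using on_same_trans[OF _ on_same_sym[OF assms(18)]] by blast
    then show False using Kxy by blast
  qed
  have dl2: "line p x' b \<noteq> line p y b"
  proof
    assume "line p x' b = line p y b"
    then have "on_same p b x' y" using line_eq[OF assms(3,4)] by blast
    then have "on_same p b x x'" using on_same_trans[OF assms(19) on_same_sym] by blast
    then show False using Kxx by blast
  qed
  have fl: "fst (line p u c) = c" for u c by (simp add: line_def)
  define A where "A i = (if i = 0 then x else if i = 1 then x' else if i = 2 then y' else y)" for i :: nat
  define B where "B i = (if i = 0 then line p x a else if i = 1 then line p x' b else if i = 2 then line p y' a else line p y b)" for i :: nat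
  have four: "{..<4::nat} = {0,1,2,3}" by auto
  have dB: "line p x a \<noteq> line p x' b" "line p x a \<noteq> line p y b" "line p y' a \<noteq> line p x' b" "line p y' a \<noteq> line p y b"
    using fl assms(8) by metis+
  have iA: "inj_on A {..<4}" unfolding four inj_on_def A_def using assms(21,22) d1 d2 d3 d4 by auto
  have iB: "inj_on B {..<4}" unfolding four inj_on_def B_def using dB dl1 dl2 by auto
  have ed: "(A i, B i) \<in> F \<and> (A ((i + 1) mod 4), B i) \<in> F" if "i < 4" for i
  proof -
    have "i = 0 \<or> i = 1 \<or> i = 2 \<or> i = 3" using that by auto
    then show ?thesis
    proof (elim disjE)
      assume "i = 0" then show ?thesis unfolding A_def B_def using assms(9,11) l1 by simp
    next
      assume "i = 1" then show ?thesis unfolding A_def B_def using assms(12,16) l2 by simp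
    next
      assume "i = 2" then show ?thesis unfolding A_def B_def using assms(15,13) l3 by simp
    next
      assume "i = 3" then show ?thesis unfolding A_def B_def using assms(14,10) l4 by simp
    qed
  qed
  show ?thesis unfolding acyc_def using iA iB ed by blast
qed


lemma finite_Pts: "finite (Pts p)" unfolding Pts_def by (simp add: finite_PiE)
lemma finite_Lns: "finite (Lns p)" unfolding Lns_def by (simp add: finite_PiE)

lemma card_Pts: "p > 0 \<Longrightarrow> card (Pts p) = nat p ^ 5"
  unfolding Pts_def by (simp add: card_PiE)

lemma card_Lns: "p > 0 \<Longrightarrow> card (Lns p) = nat p ^ 5"
proof -
  assume p: "p > 0"
  have "card (PiE {1..4::nat} (\<lambda>_. {0..<p})) = nat p ^ 4" by (simp add: card_PiE)
  then show ?thesis unfolding Lns_def using p by (simp add: card_cartesian_product power_eq_if)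
qed

lemma line_in: "p > 0 \<Longrightarrow> a \<in> {0..<p} \<Longrightarrow> line p x a \<in> Lns p"
  unfolding line_def Lns_def by (auto simp: PiE_iff)

lemma Edg_sub: "p > 0 \<Longrightarrow> Edg p \<subseteq> Pts p \<times> Lns p"
  unfolding Edg_def using line_in by auto

lemma inj_edge: "inj_on (\<lambda>(x,a). (x, line p x a)) X"
  unfolding inj_on_def line_def by auto

lemma card_Edg: "p > 0 \<Longrightarrow> card (Edg p) = nat p ^ 6"
proof -
  assume p: "p > 0"
  have "card (Edg p) = card (Pts p \<times> {0..<p})" unfolding Edg_def by (rule card_image[OF inj_edge])
  also have "\<dots> = nat p ^ 5 * nat p" using p by (simp add: card_cartesian_product card_Pts)
  finally show ?thesis by (simp add: power_eq_if)
qed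

lemma robust:
  fixes p :: int and c :: real
  assumes pr: "prime p" and FE: "F \<subseteq> Edg p" and cF: "real (card F) \<ge> c * real (nat p) ^ 6"
    and c0: "c > 0" and q1: "real (nat p) * c^2 \<ge> 2 * (c + 1)" and q2: "real (nat p) * c^4 > 4"
  shows "acyc 4 F"
proof (rule ccontr)
  assume noC: "\<not> acyc 4 F"
  have p0: "p > 0" using prime_gt_0_int[OF pr] .
  define q where "q = nat p"
  define Q where "Q = real q"
  have Q0: "Q > 0" using p0 unfolding Q_def q_def by simp
  define S where "S = {(x,a). x \<in> Pts p \<and> a \<in> {0..<p} \<and> (x, line p x a) \<in> F}"
  have FS: "F = (\<lambda>(x,a). (x, line p x a)) ` S"
  proof
    show "F \<subseteq> (\<lambda>(x,a). (x, line p x a)) ` S"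
    proof
      fix e assume e: "e \<in> F"
      obtain x l where el: "e = (x, l)" by (cases e)
      have "(x, l) \<in> Edg p" using e FE el by auto
      then have xl: "x \<in> Pts p" "fst l \<in> {0..<p}" "l = line p x (fst l)" unfolding edg_iff by auto
      then have "(x, fst l) \<in> S" using e el unfolding S_def by auto
      moreover have "e = (\<lambda>(x,a). (x, line p x a)) (x, fst l)" using el xl(3) by simp
      ultimately show "e \<in> (\<lambda>(x,a). (x, line p x a)) ` S" by (rule rev_image_eqI)
    qed
    show "(\<lambda>(x,a). (x, line p x a)) ` S \<subseteq> F" unfolding S_def by auto
  qed
  have cS: "card S = card F" unfolding FS by (rule card_image[OF inj_edge, symmetric])
  have fS: "finite S" unfolding S_def by (rule finite_subset[of _ "Pts p \<times> {0..<p}"]) (auto simp: finite_Pts)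
  define Y where "Y = {(x,a,b). (x,a) \<in> S \<and> (x,b) \<in> S \<and> a \<noteq> b}"
  have fY: "finite Y"
  proof -
    have "Y \<subseteq> Pts p \<times> {0..<p} \<times> {0..<p}" unfolding Y_def S_def by auto
    then show ?thesis using finite_subset finite_Pts by (metis finite_SigmaI finite_atLeastLessThan_int)
  qed
  have cs1: "real (card S)^2 \<le> real (card (Pts p)) * real (card {(u,v). u \<in> S \<and> v \<in> S \<and> fst u = fst v})"
    by (rule cs_fiber[OF fS finite_Pts]) (auto simp: S_def)
  have "{(u,v). u \<in> S \<and> v \<in> S \<and> fst u = fst v} \<subseteq> (\<lambda>u. (u,u)) ` S \<union> (\<lambda>(x,a,b). ((x,a),(x,b))) ` Y"
  proof (rule subsetI)
    fix w assume w: "w \<in> {(u,v). u \<in> S \<and> v \<in> S \<and> fst u = fst v}"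
    obtain x a x' b where we: "w = ((x,a),(x',b))" by (cases w) auto
    have ws: "(x,a) \<in> S" "(x',b) \<in> S" "x = x'" using w unfolding we by auto
    show "w \<in> (\<lambda>u. (u,u)) ` S \<union> (\<lambda>(x,a,b). ((x,a),(x,b))) ` Y"
    proof (cases "a = b")
      case True
      then have "w = (\<lambda>u. (u,u)) (x,a)" using we ws by simp
      then show ?thesis using ws(1) by (intro UnI1) (rule image_eqI)
    next
      case False
      then have "(x,a,b) \<in> Y" using ws unfolding Y_def by simp
      moreover have "w = (\<lambda>(x,a,b). ((x,a),(x,b))) (x,a,b)" using we ws by simp
      ultimately show ?thesis by (intro UnI2) (rule image_eqI)
    qed
  qed
  then have "card {(u,v). u \<in> S \<and> v \<in> S \<and> fst u = fst v} \<le> card ((\<lambda>u. (u,u)) ` S \<union> (\<lambda>(x,a,b). ((x,a),(x,b))) ` Y)"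
    by (rule card_mono[rotated]) (use fS fY in auto)
  also have "\<dots> \<le> card S + card Y"
    by (rule order_trans[OF card_Un_le add_mono[OF card_image_le card_image_le]]) (use fS fY in auto)
  finally have cs1b: "card {(u,v). u \<in> S \<and> v \<in> S \<and> fst u = fst v} \<le> card S + card Y" .
  have ineq1: "real (card S)^2 \<le> Q^5 * (real (card S) + real (card Y))"
  proof -
    have "real (card S)^2 \<le> Q^5 * real (card {(u,v). u \<in> S \<and> v \<in> S \<and> fst u = fst v})"
      using cs1 card_Pts[OF p0] unfolding Q_def q_def by simp
    also have "\<dots> \<le> Q^5 * (real (card S) + real (card Y))"
      using cs1b Q0 by (intro mult_left_mono) (simp_all add: of_nat_add[symmetric] del: of_nat_add)
    finally show ?thesis .
  qed
  define hY where "hY = (\<lambda>(x::nat\<Rightarrow>int,a::int,b::int). (line p x a, b))"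
  define Z where "Z = {(u,v). u \<in> Y \<and> v \<in> Y \<and> hY u = hY v \<and> u \<noteq> v}"
  have fZ: "finite Z" unfolding Z_def by (rule finite_subset[of _ "Y \<times> Y"]) (use fY in auto)
  have cs2: "real (card Y)^2 \<le> real (card (Lns p \<times> {0..<p})) * real (card {(u,v). u \<in> Y \<and> v \<in> Y \<and> hY u = hY v})"
    by (rule cs_fiber[OF fY]) (auto simp: Y_def S_def hY_def line_in p0 finite_Lns)
  have "{(u,v). u \<in> Y \<and> v \<in> Y \<and> hY u = hY v} \<subseteq> (\<lambda>u. (u,u)) ` Y \<union> Z"
    unfolding Z_def by auto
  then have "card {(u,v). u \<in> Y \<and> v \<in> Y \<and> hY u = hY v} \<le> card ((\<lambda>u. (u,u)) ` Y \<union> Z)"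
    by (rule card_mono[rotated]) (use fY fZ in auto)
  also have "\<dots> \<le> card Y + card Z"
    by (rule order_trans[OF card_Un_le add_mono[OF card_image_le order_refl]]) (use fY in auto)
  finally have cs2b: "card {(u,v). u \<in> Y \<and> v \<in> Y \<and> hY u = hY v} \<le> card Y + card Z" .
  have cL: "card (Lns p \<times> {0..<p}) = q^6" using card_Lns[OF p0] unfolding q_def by (simp add: card_cartesian_product power_eq_if)
  have ineq2: "real (card Y)^2 \<le> Q^6 * (real (card Y) + real (card Z))"
  proof -
    have "real (card Y)^2 \<le> Q^6 * real (card {(u,v). u \<in> Y \<and> v \<in> Y \<and> hY u = hY v})"
      using cs2 cL unfolding Q_def by simp
    also have "\<dots> \<le> Q^6 * (real (card Y) + real (card Z))"
      using cs2b Q0 by (intro mult_left_mono) (simp_all add: of_nat_add[symmetric] del: of_nat_add)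
    finally show ?thesis .
  qed
  define g where "g = (\<lambda>((x::nat\<Rightarrow>int,a::int,b::int),(x'::nat\<Rightarrow>int,a'::int,b'::int)). (line p x b, (x' 0 - x 0) mod p, a))"
  have ginj: "inj_on g Z"
  proof (rule inj_onI)
    fix z1 z2 assume z1: "z1 \<in> Z" and z2: "z2 \<in> Z" and gz: "g z1 = g z2"
    obtain x a b x' a' b' where z1e: "z1 = ((x,a,b),(x',a',b'))" by (cases z1) auto
    obtain y a2 b2 y' a2' b2' where z2e: "z2 = ((y,a2,b2),(y',a2',b2'))" by (cases z2) auto
    have Sx: "(x,a) \<in> S" "(x,b) \<in> S" "(x',a') \<in> S" "(x',b') \<in> S" "a \<noteq> b"
      using z1 unfolding z1e Z_def Y_def by auto
    have Sy: "(y,a2) \<in> S" "(y,b2) \<in> S" "(y',a2') \<in> S" "(y',b2') \<in> S"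
      using z2 unfolding z2e Z_def Y_def by auto
    have h1: "line p x a = line p x' a'" "b = b'" "((x,a,b),(x',a',b')) \<noteq> ((y,a2,b2),(y',a2',b2')) \<or> True"
      using z1 unfolding z1e Z_def hY_def by auto
    have h1n: "(x,a,b) \<noteq> (x',a',b')" using z1 unfolding z1e Z_def by auto
    have h2: "line p y a2 = line p y' a2'" "b2 = b2'" "(y,a2,b2) \<noteq> (y',a2',b2')"
      using z2 unfolding z2e Z_def hY_def by auto
    have aa: "a' = a" using h1(1) unfolding line_def by simp
    have aa2: "a2' = a2" using h2(1) unfolding line_def by simp
    have g': "line p x b = line p y b2" "(x' 0 - x 0) mod p = (y' 0 - y 0) mod p" "a = a2"
      using gz unfolding z1e z2e g_def by auto
    have bb: "b2 = b" using g'(1) unfolding line_def by simp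
    have xP: "x \<in> Pts p" "x' \<in> Pts p" "y \<in> Pts p" "y' \<in> Pts p" and aZ: "a \<in> {0..<p}" "b \<in> {0..<p}"
      using Sx Sy unfolding S_def by auto
    have F8: "(x, line p x a) \<in> F" "(x, line p x b) \<in> F" "(x', line p x' a) \<in> F" "(x', line p x' b) \<in> F"
      "(y, line p y a) \<in> F" "(y, line p y b) \<in> F" "(y', line p y' a) \<in> F" "(y', line p y' b) \<in> F"
    proof -
      have e1: "a2 = a" "a2' = a" "b2 = b" "b2' = b" "a' = a" "b' = b" using aa aa2 g'(3) bb h1(2) h2(2) by auto
      have "(x,a) \<in> S" "(x,b) \<in> S" "(x',a) \<in> S" "(x',b) \<in> S" "(y,a) \<in> S" "(y,b) \<in> S" "(y',a) \<in> S" "(y',b) \<in> S"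
        using Sx Sy unfolding e1 by auto
      then show "(x, line p x a) \<in> F" "(x, line p x b) \<in> F" "(x', line p x' a) \<in> F" "(x', line p x' b) \<in> F"
      "(y, line p y a) \<in> F" "(y, line p y b) \<in> F" "(y', line p y' a) \<in> F" "(y', line p y' b) \<in> F"
        unfolding S_def by auto
    qed
    have o1: "on_same p a x x'" using line_eq[OF xP(1,2)] h1(1) aa by simp
    have o2: "on_same p a y y'" using line_eq[OF xP(3,4)] h2(1) aa2 g'(3) by simp
    have o3: "on_same p b x y" using line_eq[OF xP(1,3)] g'(1) bb by simp
    have dv: "p dvd ((x' 0 - x 0) - (y' 0 - y 0))" using g'(2) by (simp add: mod_eq_dvd_iff)
    have o4: "on_same p b x' y'" by (rule para[OF o1 o2 o3 dv])
    have xx: "x \<noteq> x'" using h1n aa h1(2) by auto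
    show "z1 = z2"
    proof (cases "x = y")
      case False
      then have "acyc 4 F" using rect_c8[OF pr xP aZ Sx(5) F8 o1 o2 o3 o4 xx] by blast
      then show ?thesis using noC by blast
    next
      case True
      have "on_same p a x' y'" using on_same_trans[OF on_same_sym[OF o1]] o2 True by blast
      moreover have e0: "x' 0 = y' 0"
      proof -
        have "p dvd (x' 0 - y' 0)" using dv True by simp
        moreover have "x' 0 \<in> {0..<p}" "y' 0 \<in> {0..<p}" using xP(2,4) unfolding Pts_def PiE_iff by auto
        ultimately show ?thesis using zp_eq[of "x' 0" p "y' 0"] by simp
      qed
      ultimately have "\<And>j. j < 5 \<Longrightarrow> p dvd (y' j - x' j)" unfolding on_same_def by simp
      then have "x' = y'" by (rule pts_eq[OF xP(2,4)])
      then show ?thesis unfolding z1e z2e using True aa aa2 g'(3) bb h1(2) h2(2) by simp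
    qed
  qed
  have gZ: "g ` Z \<subseteq> Lns p \<times> {0..<p} \<times> {0..<p}"
  proof
    fix w assume "w \<in> g ` Z"
    then obtain x a b x' a' b' where w: "w = g ((x,a,b),(x',a',b'))" "((x,a,b),(x',a',b')) \<in> Z" by auto
    then have "b \<in> {0..<p}" "a \<in> {0..<p}" unfolding Z_def Y_def S_def by auto
    then show "w \<in> Lns p \<times> {0..<p} \<times> {0..<p}" unfolding w g_def using p0 line_in by auto
  qed
  have "card Z \<le> card (Lns p \<times> {0..<p} \<times> {0..<p})"
    using card_inj_on_le[OF ginj gZ] finite_Lns by (simp add: finite_cartesian_product)
  also have "\<dots> = q^7" using card_Lns[OF p0] unfolding q_def by (simp add: card_cartesian_product power_eq_if)
  finally have cZ: "real (card Z) \<le> Q^7" unfolding Q_def by (metis of_nat_le_iff of_nat_power)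
  define s where "s = real (card S)"
  define y where "y = real (card Y)"
  define z where "z = real (card Z)"
  have sF: "s \<ge> c * Q^6" using cF cS unfolding s_def Q_def q_def by simp
  have i1: "s^2 \<le> Q^5 * (s + y)" using ineq1 unfolding s_def y_def .
  have i2: "y^2 \<le> Q^6 * (y + z)" using ineq2 unfolding y_def z_def .
  have i3: "z \<le> Q^7" using cZ unfolding z_def .
  have q1': "Q * c^2 \<ge> 2 * (c + 1)" using q1 unfolding Q_def q_def .
  have q2': "Q * c^4 > 4" using q2 unfolding Q_def q_def .
  have cQ1: "c * Q \<ge> 1"
  proof -
    have gen: "\<And>M. 2 * (c + 1) \<le> M \<Longrightarrow> c * 1 \<le> M" using c0 by simp
    have "c * 1 \<le> Q * c^2" by (rule gen[OF q1'])
    also have "Q * c^2 = c * (c * Q)" by (simp add: power2_eq_square)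
    finally have "c * 1 \<le> c * (c * Q)" .
    then show ?thesis using mult_left_le_imp_le[OF _ c0] by blast
  qed
  have s0: "s \<ge> 0" unfolding s_def by simp
  have h1: "y \<ge> s * (s / Q^5 - 1)"
  proof -
    have "s^2 / Q^5 \<le> s + y" using i1 Q0 by (simp add: divide_le_eq mult.commute)
    then show ?thesis by (simp add: power2_eq_square algebra_simps)
  qed
  have h2: "s / Q^5 \<ge> c * Q"
  proof -
    have "s / Q^5 \<ge> c * Q^6 / Q^5" using sF Q0 by (simp add: divide_right_mono)
    also have "c * Q^6 / Q^5 = c * Q" using Q0 by (simp add: power_eq_if)
    finally show ?thesis .
  qed
  have h3: "s * (s / Q^5 - 1) \<ge> c * Q^6 * (c * Q - 1)"
    by (rule mult_mono) (use sF h2 cQ1 s0 in auto)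
  define K where "K = c * (c * Q - 1)"
  have yK: "y \<ge> Q^6 * K" using h1 h3 unfolding K_def by (simp add: algebra_simps)
  have K1: "K \<ge> c^2 * Q / 2 + 1" using q1' unfolding K_def by (simp add: power2_eq_square algebra_simps)
  have cq0: "c^2 * Q / 2 > 0" using c0 Q0 by simp
  have y0: "y \<ge> 0" unfolding y_def by simp
  have ym: "y - Q^6 \<ge> Q^6 * (K - 1)" using yK by (simp add: algebra_simps)
  have K0: "K - 1 \<ge> 0" using K1 cq0 by simp
  have Q6: "Q^6 > 0" using Q0 by simp
  have "y * (y - Q^6) \<ge> (Q^6 * K) * (Q^6 * (K - 1))"
    by (rule mult_mono) (use yK ym K0 Q6 y0 in auto)
  moreover have "K * (K - 1) > Q"
  proof -
    have "Q = Q * 4 / 4" by simp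
    also have "Q * 4 / 4 < Q * (Q * c^4) / 4" using q2' Q0 by (intro divide_strict_right_mono mult_strict_left_mono) auto
    also have "Q * (Q * c^4) / 4 = (c^2 * Q / 2) * (c^2 * Q / 2)" by (simp add: power2_eq_square algebra_simps power4_eq_xxxx)
    also have "(c^2 * Q / 2) * (c^2 * Q / 2) < (c^2 * Q / 2 + 1) * (c^2 * Q / 2)" 
    proof -
      have gen2: "\<And>A::real. A > 0 \<Longrightarrow> A * A < (A + 1) * A" by (simp add: distrib_right)
      show ?thesis by (rule gen2[OF cq0])
    qed
    also have "(c^2 * Q / 2 + 1) * (c^2 * Q / 2) \<le> K * (K - 1)"
      by (rule mult_mono) (use K1 cq0 in auto)
    finally show ?thesis by simp
  qed
  ultimately have "y * (y - Q^6) > Q^12 * Q"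
  proof -
    assume a1: "y * (y - Q^6) \<ge> (Q^6 * K) * (Q^6 * (K - 1))" and a2: "K * (K - 1) > Q"
    have "(Q^6 * K) * (Q^6 * (K - 1)) = Q^12 * (K * (K - 1))" by (simp add: algebra_simps power_add[symmetric])
    moreover have "Q^12 * (K * (K - 1)) > Q^12 * Q" using a2 Q0 by simp
    ultimately show ?thesis using a1 by linarith
  qed
  moreover have "y * (y - Q^6) \<le> Q^13"
  proof -
    have "y^2 \<le> Q^6 * y + Q^6 * Q^7" using i2 i3 Q6
      by (smt (verit) distrib_left mult_left_mono)
    then show ?thesis by (simp add: power2_eq_square algebra_simps power_add[symmetric])
  qed
  moreover have e13: "Q^13 = Q^12 * Q"
  proof -
    have "Q^(12+1) = Q^12 * Q^1" by (rule power_add)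
    then show ?thesis by simp
  qed
  ultimately show False by linarith
qed


lemma acyc_image:
  assumes EPL: "E \<subseteq> P \<times> L" and fi: "inj_on f P" and gi: "inj_on g L"
  shows "acyc k (map_prod f g ` E) \<longleftrightarrow> acyc k E"
proof
  assume "acyc k E"
  then obtain a b where ia: "inj_on a {..<k}" and ib: "inj_on b {..<k}"
    and e: "\<And>i. i < k \<Longrightarrow> (a i, b i) \<in> E \<and> (a ((i + 1) mod k), b i) \<in> E"
    unfolding acyc_def by blast
  have aP: "a ` {..<k} \<subseteq> P"
  proof
    fix z assume "z \<in> a ` {..<k}"
    then obtain i where i: "i < k" "z = a i" by auto
    then show "z \<in> P" using e[OF i(1)] EPL by auto
  qed
  have bL: "b ` {..<k} \<subseteq> L"
  proof
    fix z assume "z \<in> b ` {..<k}"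
    then obtain i where i: "i < k" "z = b i" by auto
    then show "z \<in> L" using e[OF i(1)] EPL by auto
  qed
  have i1: "inj_on (f \<circ> a) {..<k}" by (rule comp_inj_on[OF ia inj_on_subset[OF fi aP]])
  have i2: "inj_on (g \<circ> b) {..<k}" by (rule comp_inj_on[OF ib inj_on_subset[OF gi bL]])
  have e2: "((f \<circ> a) i, (g \<circ> b) i) \<in> map_prod f g ` E \<and> ((f \<circ> a) ((i + 1) mod k), (g \<circ> b) i) \<in> map_prod f g ` E"
    if "i < k" for i
  proof -
    have "map_prod f g (a i, b i) \<in> map_prod f g ` E" using e[OF that] by (intro imageI) simp
    moreover have "map_prod f g (a ((i + 1) mod k), b i) \<in> map_prod f g ` E" using e[OF that] by (intro imageI) simp
    ultimately show ?thesis by simp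
  qed
  show "acyc k (map_prod f g ` E)" unfolding acyc_def
    by (intro exI[of _ "f \<circ> a"] exI[of _ "g \<circ> b"] conjI i1 i2 allI impI e2)
next
  assume "acyc k (map_prod f g ` E)"
  then obtain a' b' where ia: "inj_on a' {..<k}" and ib: "inj_on b' {..<k}"
    and e: "\<And>i. i < k \<Longrightarrow> (a' i, b' i) \<in> map_prod f g ` E \<and> (a' ((i + 1) mod k), b' i) \<in> map_prod f g ` E"
    unfolding acyc_def by blast
  define a where "a i = inv_into P f (a' i)" for i
  define b where "b i = inv_into L g (b' i)" for i
  have k1: "(a i, b i) \<in> E \<and> f (a i) = a' i" if ik: "i < k" for i
  proof -
    obtain u v where uv: "(u, v) \<in> E" "a' i = f u" "b' i = g v" using e[OF ik] by auto
    have "u \<in> P" "v \<in> L" using uv(1) EPL by auto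
    then have "a i = u" "b i = v" unfolding a_def b_def uv using fi gi by (simp_all add: inv_into_f_f)
    then show ?thesis using uv by simp
  qed
  have k2: "(a ((i + 1) mod k), b i) \<in> E" if ik: "i < k" for i
  proof -
    obtain u v where uv: "(u, v) \<in> E" "a' ((i + 1) mod k) = f u" "b' i = g v" using e[OF ik] by auto
    have "u \<in> P" "v \<in> L" using uv(1) EPL by auto
    then have "a ((i + 1) mod k) = u" "b i = v" unfolding a_def b_def uv using fi gi by (simp_all add: inv_into_f_f)
    then show ?thesis using uv by simp
  qed
  have k3: "g (b i) = b' i" if ik: "i < k" for i
  proof -
    obtain u v where uv: "(u, v) \<in> E" "a' i = f u" "b' i = g v" using e[OF ik] by auto
    have "v \<in> L" using uv(1) EPL by auto
    then show ?thesis unfolding b_def uv using gi by (simp add: inv_into_f_f)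
  qed
  have i1: "inj_on a {..<k}"
  proof (rule inj_onI)
    fix i j assume "i \<in> {..<k}" "j \<in> {..<k}" "a i = a j"
    then have "a' i = a' j" using k1 by (metis lessThan_iff)
    then show "i = j" using ia \<open>i \<in> {..<k}\<close> \<open>j \<in> {..<k}\<close> inj_on_def by metis
  qed
  have i2: "inj_on b {..<k}"
  proof (rule inj_onI)
    fix i j assume "i \<in> {..<k}" "j \<in> {..<k}" "b i = b j"
    then have "b' i = b' j" using k3 by (metis lessThan_iff)
    then show "i = j" using ib \<open>i \<in> {..<k}\<close> \<open>j \<in> {..<k}\<close> inj_on_def by metis
  qed
  show "acyc k E" unfolding acyc_def
    by (intro exI[of _ a] exI[of _ b] conjI i1 i2 allI impI) (use k1 k2 in auto)
qed

lemma cc_acyc: "contains_cycle m E \<longleftrightarrow> even m \<and> m \<ge> 4 \<and> acyc (m div 2) E"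
  unfolding contains_cycle_def acyc_def by simp

theorem theorem1p3:
  fixes c :: real and N0 :: nat
  assumes "c > 0" and "N0 \<ge> 1"
  shows "\<exists>(N::nat) (W::(nat \<times> nat) set).
           N \<ge> N0 \<and> bip_graph N W \<and>
           real (card W) = real N powr (6/5) \<and>
           \<not> contains_cycle 10 W \<and>
           (\<forall>F \<subseteq> W. real (card F) \<ge> c * real (card W) \<longrightarrow> contains_cycle 8 F)"
proof -
  have c0: "c > 0" using assms(1) .
  define K where "K = 2 * (c + 1) / c^2 + 4 / c^4 + 1"
  obtain p0 :: nat where pp: "prime p0" "p0 > N0 + nat \<lceil>K\<rceil>" using bigger_prime by blast
  define p where "p = int p0"
  have prp: "prime p" using pp(1) unfolding p_def by simp
  have ppos: "p > 0" using prime_gt_0_int[OF prp] .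
  have np: "nat p = p0" unfolding p_def by simp
  have p0pos: "p0 > 0" using pp(1) prime_gt_0_nat by blast
  have pK: "real p0 > K"
  proof -
    have "K \<le> real (nat \<lceil>K\<rceil>)" by (rule real_nat_ceiling_ge)
    also have "\<dots> < real p0" using pp(2) by simp
    finally show ?thesis .
  qed
  have c2: "c^2 > 0" "c^4 > 0" using c0 by simp_all
  have q1: "real (nat p) * c^2 \<ge> 2 * (c + 1)"
  proof -
    have "2 * (c + 1) / c^2 \<le> real p0" using pK unfolding K_def using c2 by (smt (verit) divide_nonneg_pos)
    then show ?thesis using c2(1) np by (simp add: pos_divide_le_eq)
  qed
  have q2: "real (nat p) * c^4 > 4"
  proof -
    have "4 / c^4 < real p0" using pK unfolding K_def using c2 c0 by (smt (verit) divide_nonneg_pos)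
    then show ?thesis using c2(2) np by (simp add: pos_divide_less_eq)
  qed
  define P where "P = Pts p"
  define L where "L = Lns p"
  define N where "N = p0 ^ 5"
  have cP: "card P = N" unfolding P_def N_def using card_Pts[OF ppos] np by simp
  have cL: "card L = N" unfolding L_def N_def using card_Lns[OF ppos] np by simp
  obtain f where f: "bij_betw f P {0..<card P}" using ex_bij_betw_finite_nat[OF finite_Pts] unfolding P_def by blast
  obtain g where g: "bij_betw g L {0..<card L}" using ex_bij_betw_finite_nat[OF finite_Lns] unfolding L_def by blast
  have fi: "inj_on f P" and gi: "inj_on g L" using f g bij_betw_imp_inj_on by blast+
  have fP: "f ` P = {0..<N}" using f cP bij_betw_imp_surj_on by metis
  have gL: "g ` L = {0..<N}" using g cL bij_betw_imp_surj_on by metis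
  have EPL: "Edg p \<subseteq> P \<times> L" unfolding P_def L_def by (rule Edg_sub[OF ppos])
  define W where "W = map_prod f g ` Edg p"
  have mi: "inj_on (map_prod f g) (P \<times> L)" by (rule map_prod_inj_on[OF fi gi])
  have miE: "inj_on (map_prod f g) (Edg p)" by (rule inj_on_subset[OF mi EPL])
  have cW: "card W = p0 ^ 6" unfolding W_def using card_image[OF miE] card_Edg[OF ppos] np by simp
  have h1: "N \<ge> N0"
  proof -
    have "p0 \<le> p0 ^ 5" by (rule self_le_power) (use p0pos in auto)
    then show ?thesis unfolding N_def using pp(2) by linarith
  qed
  have h2: "bip_graph N W"
    unfolding bip_graph_def W_def
  proof
    fix w assume "w \<in> map_prod f g ` Edg p"
    then obtain x l where "(x, l) \<in> Edg p" "w = (f x, g l)" by auto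
    moreover then have "x \<in> P" "l \<in> L" using EPL by auto
    ultimately show "w \<in> {0..<N} \<times> {0..<N}" using fP gL by auto
  qed
  have h3: "real (card W) = real N powr (6/5)"
  proof -
    have rp: "real p0 > 0" using p0pos by simp
    have eqN: "real N = real p0 powr (real 5)" unfolding N_def using powr_realpow[OF rp, of 5] by simp
    have e56: "real 5 * (6/5) = real 6" by simp
    have "real N powr (6/5) = (real p0 powr (real 5)) powr (6/5)" by (simp only: eqN)
    also have "\<dots> = real p0 powr (real 5 * (6/5))" by (rule powr_powr)
    also have "\<dots> = real p0 powr (real 6)" by (simp only: e56)
    also have "\<dots> = real p0 ^ 6" by (rule powr_realpow[OF rp])
    finally show ?thesis using cW by (simp only: of_nat_power)
  qed
  have h4: "\<not> contains_cycle 10 W"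
  proof
    assume "contains_cycle 10 W"
    then have "acyc 5 W" unfolding cc_acyc by simp
    then have "acyc 5 (Edg p)" unfolding W_def using acyc_image[OF EPL fi gi] by blast
    then show False using no_c10[OF prp] unfolding acyc_def by blast
  qed
  have h5: "contains_cycle 8 F" if FW: "F \<subseteq> W" and cF: "real (card F) \<ge> c * real (card W)" for F
  proof -
    define F' where "F' = {e \<in> Edg p. map_prod f g e \<in> F}"
    have F'E: "F' \<subseteq> Edg p" unfolding F'_def by auto
    have FF: "F = map_prod f g ` F'"
    proof
      show "F \<subseteq> map_prod f g ` F'"
      proof
        fix w assume w: "w \<in> F"
        then have "w \<in> W" using FW by auto
        then obtain e where e: "e \<in> Edg p" "w = map_prod f g e" unfolding W_def by auto
        then have "e \<in> F'" unfolding F'_def using w by simp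
        then show "w \<in> map_prod f g ` F'" using e(2) by (rule rev_image_eqI)
      qed
      show "map_prod f g ` F' \<subseteq> F" unfolding F'_def by auto
    qed
    have cF': "card F = card F'" unfolding FF by (rule card_image[OF inj_on_subset[OF miE F'E]])
    have "real (card F') \<ge> c * real (nat p) ^ 6" using cF cF' cW np by simp
    then have "acyc 4 F'" by (rule robust[OF prp F'E _ c0 q1 q2])
    then have "acyc 4 F" unfolding FF using acyc_image[OF order_trans[OF F'E EPL] fi gi] by blast
    then show ?thesis unfolding cc_acyc by simp
  qed
  show ?thesis
    by (intro exI[of _ N] exI[of _ W] conjI h1 h2 h3 h4 allI impI h5) auto
qed

end
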